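(* Let $f:[0,\infty)\to\mathbb{R}$ be convex with $f(1)=0$ and $G:[0,\mathsf{D_m}(f))\to[0,\infty)$ non-decreasing with $G(0)=0$. Let $W_{Y|X}$ be a channel between finite alphabets $\mathcal{X},\mathcal{Y}$ that is permutation invariant, i.e., for every permutation $\pi$ of $\mathcal{X}$ there is a permutation $\pi'$ of $\mathcal{Y}$ with $W_{Y|X}(\pi'(y)|\pi(x))=W_{Y|X}(y|x)$ for all $x,y$. Then the uniform distribution on $\mathcal{X}$ maximizes $p_X\mapsto I_{G,f}(X;Y)$, where $Y$ is the output of $W_{Y|X}$ with input $X\sim p_X$.
   Context: For distributions $p\ll q$ on a finite set, $D_f(p\|q)=\sum_y q(y) f(p(y)/q(y))$ with $0f(0/0)=0$; $\mathsf{D_m}(f)=f(0)+\lim_{t\to\infty}f(t)/t$. $I_{G,f}(X;Y)=\min_{q_Y}\sum_x p_X(x)\,G(D_f(W_{Y|X=x}\|q_Y))$. *)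

theory Defs
  imports "HOL-Analysis.Analysis"
begin

definition is_dist :: "('a::finite \<Rightarrow> real) \<Rightarrow> bool" where
  "is_dist p \<longleftrightarrow> (\<forall>a. 0 \<le> p a) \<and> (\<Sum>a\<in>UNIV. p a) = 1"

text \<open>Channel W(y|x) = W x y: every row is a distribution.\<close>
definition is_channel :: "('x::finite \<Rightarrow> 'y::finite \<Rightarrow> real) \<Rightarrow> bool" where
  "is_channel W \<longleftrightarrow> (\<forall>x. is_dist (W x))"

definition abs_cont :: "('a \<Rightarrow> real) \<Rightarrow> ('a \<Rightarrow> real) \<Rightarrow> bool" where
  "abs_cont p q \<longleftrightarrow> (\<forall>a. q a = 0 \<longrightarrow> p a = 0)"

text \<open>f-divergence D_f(p||q) = sum_y q(y) f(p(y)/q(y)) (for p << q); terms with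
  q(y) = 0 (hence p(y) = 0) vanish, matching the convention 0 f(0/0) = 0.\<close>
definition fdiv :: "(real \<Rightarrow> real) \<Rightarrow> ('a::finite \<Rightarrow> real) \<Rightarrow> ('a \<Rightarrow> real) \<Rightarrow> real" where
  "fdiv f p q = (\<Sum>a\<in>UNIV. q a * f (p a / q a))"

definition Dm :: "(real \<Rightarrow> real) \<Rightarrow> ereal" where
  "Dm f = ereal (f 0) + Lim at_top (\<lambda>t. ereal (f t / t))"

text \<open>I_{G,f}(X;Y) = min over output distributions q_Y (for which all divergences in
  the objective are defined, i.e. W(.|x) << q_Y for x in the support of p_X) of
  sum_x p_X(x) G(D_f(W(.|x) || q_Y)); the minimum is rendered as an infimum.\<close>
definition I_Gf :: "(real \<Rightarrow> real) \<Rightarrow> (real \<Rightarrow> real) \<Rightarrow> ('x::finite \<Rightarrow> 'y::finite \<Rightarrow> real)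
    \<Rightarrow> ('x \<Rightarrow> real) \<Rightarrow> real" where
  "I_Gf G f W p = (INF q \<in> {q. is_dist q \<and> (\<forall>x. 0 < p x \<longrightarrow> abs_cont (W x) q)}.
       (\<Sum>x\<in>UNIV. p x * G (fdiv f (W x) q)))"

end

theory Submission imports Defs begin

lemma convK:
  fixes f :: "real \<Rightarrow> real"
  assumes cf: "convex_on {0..} f" and s: "0 \<le> s" "s \<le> t" "0 < t"
  shows "f s \<le> f 0 + s * ((f t - f 0) / t)"
proof -
  have "f ((1 - s/t) *\<^sub>R 0 + (s/t) *\<^sub>R t) \<le> (1 - s/t) * f 0 + (s/t) * f t"
    by (rule convex_onD[OF cf]) (use s in auto)
  moreover have "(1 - s/t) *\<^sub>R 0 + (s/t) *\<^sub>R t = s" using s by simp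
  moreover have "(1 - s/t) * f 0 + (s/t) * f t = f 0 + s * ((f t - f 0) / t)"
    using s by (simp add: field_simps)
  ultimately show ?thesis by simp
qed

lemma Dm_bound:
  fixes f :: "real \<Rightarrow> real"
  assumes cf: "convex_on {0..} f" and s: "0 < s"
  shows "ereal (f 0 + (f s - f 0) / s) \<le> Dm f"
proof -
  define g where "g t = (f t - f 0) / t" for t
  define S where "S = (SUP t\<in>{0<..}. ereal (g t))"
  have gmono: "g a \<le> g b" if "0 < a" "a \<le> b" for a b
  proof -
    have "f a \<le> f 0 + a * g b" using convK[OF cf, of a b] that by (simp add: g_def)
    then have "f a - f 0 \<le> a * g b" by simp
    then show ?thesis using that by (simp add: g_def divide_simps mult.commute)
  qed
  have gS: "ereal (g t) \<le> S" if "0 < t" for t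
    unfolding S_def using that by (intro SUP_upper) auto
  have t1: "((\<lambda>t. ereal (g t)) \<longlongrightarrow> S) at_top"
  proof (rule order_tendstoI)
    fix a assume "a < S"
    then obtain t where t: "0 < t" "a < ereal (g t)" unfolding S_def less_SUP_iff by auto
    show "\<forall>\<^sub>F x in at_top. a < ereal (g x)"
      using eventually_ge_at_top[of t]
    proof (rule eventually_mono)
      fix x assume "t \<le> x"
      then have "g t \<le> g x" using gmono t by auto
      then show "a < ereal (g x)" using t(2) by (meson ereal_less_eq(3) less_le_trans)
    qed
  next
    fix a assume "S < a"
    show "\<forall>\<^sub>F x in at_top. ereal (g x) < a"
      using eventually_gt_at_top[of 0]
      by (rule eventually_mono) (use gS \<open>S < a\<close> in \<open>meson le_less_trans\<close>)
  qed
  have t2: "((\<lambda>t. ereal (f 0 / t)) \<longlongrightarrow> ereal 0) at_top"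
    unfolding lim_ereal by (intro tendsto_divide_0[OF tendsto_const] filterlim_at_top_imp_at_infinity filterlim_ident)
  have Sne: "S \<noteq> -\<infinity>" using gS[of 1] by auto
  have t3: "((\<lambda>t. ereal (g t) + ereal (f 0 / t)) \<longlongrightarrow> S + ereal 0) at_top"
    by (rule tendsto_add_ereal_nonneg[OF Sne _ t1 t2]) simp
  have t4: "((\<lambda>t. ereal (f t / t)) \<longlongrightarrow> S) at_top"
  proof -
    have "\<forall>\<^sub>F t in at_top. ereal (g t) + ereal (f 0 / t) = ereal (f t / t)"
      using eventually_gt_at_top[of 0]
      by (rule eventually_mono) (simp add: g_def field_simps)
    from tendsto_cong[OF this] t3 show ?thesis by simp
  qed
  have "Dm f = ereal (f 0) + S"
    unfolding Dm_def using tendsto_Lim[OF trivial_limit_at_top_linorder t4] by simp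
  moreover have "ereal (f 0 + g s) \<le> ereal (f 0) + S"
    using gS[OF s] by (metis add_left_mono plus_ereal.simps(1))
  ultimately show ?thesis by (simp add: g_def)
qed

lemma fdiv_ge:
  fixes f :: "real \<Rightarrow> real" and P q :: "'a::finite \<Rightarrow> real"
  assumes cf: "convex_on {0..} f" and f1: "f 1 = 0"
    and P: "is_dist P" and q: "is_dist q" and ac: "abs_cont P q"
  shows "0 \<le> fdiv f P q \<and> (Dm f \<le> ereal (fdiv f P q) \<longrightarrow> fdiv f P q = 0)"
proof -
  define D where "D = fdiv f P q"
  define t where "t y = P y / q y" for y
  define g where "g t = (f t - f 0) / t" for t
  have qpos: "\<And>y. 0 \<le> q y" and qs: "(\<Sum>y\<in>UNIV. q y) = 1" using q by (auto simp: is_dist_def)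
  have Ppos: "\<And>y. 0 \<le> P y" and Ps: "(\<Sum>y\<in>UNIV. P y) = 1" using P by (auto simp: is_dist_def)
  have qt: "q y * t y = P y" for y
    using ac by (cases "q y = 0") (auto simp: abs_cont_def t_def)
  have tpos: "0 \<le> t y" for y using qpos Ppos by (simp add: t_def)
  have Dd: "D = (\<Sum>y\<in>UNIV. q y * f (t y))" by (simp add: D_def fdiv_def t_def)
  have "f (\<Sum>y\<in>UNIV. q y *\<^sub>R t y) \<le> (\<Sum>y\<in>UNIV. q y * f (t y))"
    by (rule convex_on_sum[OF _ _ cf qs]) (auto simp: qpos tpos)
  moreover have "(\<Sum>y\<in>UNIV. q y *\<^sub>R t y) = 1" using qt Ps by simp
  ultimately have D0: "0 \<le> D" using f1 Dd by simp
  define T where "T = max 1 (Max (range t))"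
  have T1: "1 \<le> T" by (simp add: T_def)
  have tT: "t y \<le> T" for y unfolding T_def by (rule max.coboundedI2) simp
  have "D \<le> (\<Sum>y\<in>UNIV. q y * (f 0 + t y * g T))"
    unfolding Dd
  proof (rule sum_mono)
    fix y
    have "f (t y) \<le> f 0 + t y * g T" using convK[OF cf tpos tT, of y] T1 by (simp add: g_def)
    then show "q y * f (t y) \<le> q y * (f 0 + t y * g T)" by (rule mult_left_mono) (rule qpos)
  qed
  also have "\<dots> = f 0 * (\<Sum>y\<in>UNIV. q y) + (\<Sum>y\<in>UNIV. q y * t y) * g T"
    by (simp add: algebra_simps sum.distrib sum_distrib_left sum_distrib_right)
  also have "\<dots> = f 0 + g T" using qs qt Ps by simp
  finally have DT: "D \<le> f 0 + g T" .
  have "D = 0" if DmD: "Dm f \<le> ereal D"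
  proof -
    have b1: "f 0 + g (2*T) \<le> D" using Dm_bound[OF cf, of "2*T"] T1 DmD
      by (simp add: g_def) (meson ereal_less_eq(3) order_trans)
    have b2: "f 0 + g T \<le> D" using Dm_bound[OF cf, of "T"] T1 DmD
      by (simp add: g_def) (meson ereal_less_eq(3) order_trans)
    have g2: "g (2*T) \<le> g T" using b1 DT by simp
    define th where "th = (T - 1) / (2*T - 1)"
    have th: "0 \<le> th" "th \<le> 1" using T1 by (auto simp: th_def divide_simps)
    have "f ((1 - th) *\<^sub>R 1 + th *\<^sub>R (2*T)) \<le> (1 - th) * f 1 + th * f (2*T)"
      by (rule convex_onD[OF cf th]) (use T1 in auto)
    moreover have "(1 - th) *\<^sub>R 1 + th *\<^sub>R (2*T) = T"
    proof -
      have "th * (2*T - 1) = T - 1" using T1 by (simp add: th_def)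
      then show ?thesis by (simp add: algebra_simps)
    qed
    ultimately have fT: "f T \<le> th * f (2*T)" using f1 by simp
    have eT: "f T = f 0 + T * g T" using T1 by (simp add: g_def)
    have e2T: "f (2*T) = f 0 + 2 * T * g (2*T)" using T1 by (simp add: g_def)
    have "f (2*T) \<le> f 0 + 2 * T * g T" using e2T g2 T1 by simp
    then have "th * f (2*T) \<le> th * (f 0 + 2 * T * g T)" using th by (simp add: mult_left_mono)
    with fT eT have "(2*T-1) * (f 0 + T * g T) \<le> (2*T-1) * (th * (f 0 + 2 * T * g T))"
      using T1 by (intro mult_left_mono) auto
    also have "\<dots> = (T - 1) * (f 0 + 2 * T * g T)" using T1 by (simp add: th_def)
    finally have "T * (f 0 + g T) \<le> 0" by (simp add: algebra_simps)
    then have "f 0 + g T \<le> 0" using T1 by (simp add: mult_le_0_iff)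
    then show ?thesis using DT D0 by simp
  qed
  then show ?thesis using D0 by (simp add: D_def)
qed

lemma G_fdiv_nonneg:
  fixes f G :: "real \<Rightarrow> real" and P q :: "'a::finite \<Rightarrow> real"
  assumes cf: "convex_on {0..} f" and f1: "f 1 = 0"
    and G_nonneg: "\<And>a. 0 \<le> a \<Longrightarrow> ereal a < Dm f \<Longrightarrow> 0 \<le> G a"
    and G_zero: "G 0 = 0"
    and P: "is_dist P" and q: "is_dist q" and ac: "abs_cont P q"
  shows "0 \<le> G (fdiv f P q)"
  using fdiv_ge[OF cf f1 P q ac] G_nonneg[of "fdiv f P q"] G_zero
  by (cases "ereal (fdiv f P q) < Dm f") (auto simp: not_less)

theorem proposition1:
  fixes f :: "real \<Rightarrow> real" and G :: "real \<Rightarrow> real"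
    and W :: "'x::finite \<Rightarrow> 'y::finite \<Rightarrow> real"
  assumes f_convex: "convex_on {0..} f"
    and f_one: "f 1 = 0"
    and G_nonneg: "\<And>a. 0 \<le> a \<Longrightarrow> ereal a < Dm f \<Longrightarrow> 0 \<le> G a"
    and G_mono: "\<And>a b. 0 \<le> a \<Longrightarrow> a \<le> b \<Longrightarrow> ereal b < Dm f \<Longrightarrow> G a \<le> G b"
    and G_zero: "G 0 = 0"
    and W_channel: "is_channel W"
    and W_perm_inv: "\<And>\<pi>. bij (\<pi> :: 'x \<Rightarrow> 'x) \<Longrightarrow>
        \<exists>\<pi>' :: 'y \<Rightarrow> 'y. bij \<pi>' \<and> (\<forall>x y. W (\<pi> x) (\<pi>' y) = W x y)"
    and p_dist: "is_dist p"
  shows "I_Gf G f W p \<le> I_Gf G f W (\<lambda>_. 1 / real CARD('x))"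
proof -
  define n where "n = real CARD('x)"
  have npos: "0 < n" by (simp add: n_def)
  define Fp where "Fp = {q. is_dist q \<and> (\<forall>x. 0 < p x \<longrightarrow> abs_cont (W x) q)}"
  define Fu where "Fu = {q. is_dist q \<and> (\<forall>x::'x. 0 < 1 / n \<longrightarrow> abs_cont (W x) q)}"
  define val where "val r q = (\<Sum>x\<in>UNIV. r x * G (fdiv f (W x) q))" for r q
  have Ip: "I_Gf G f W p = Inf (val p ` Fp)" by (simp add: I_Gf_def Fp_def val_def)
  have Iu: "I_Gf G f W (\<lambda>_. 1 / real CARD('x)) = Inf (val (\<lambda>_. 1/n) ` Fu)"
    by (simp add: I_Gf_def Fu_def val_def n_def)
  have Wd: "\<And>x. is_dist (W x)" using W_channel by (simp add: is_channel_def)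
  have ppos: "\<And>x. 0 \<le> p x" and psum: "(\<Sum>x\<in>UNIV. p x) = 1" using p_dist by (auto simp: is_dist_def)
  have bdd: "bdd_below (val p ` Fp)"
  proof (rule bdd_belowI2)
    fix q assume "q \<in> Fp"
    then have q: "is_dist q" "\<And>x. 0 < p x \<Longrightarrow> abs_cont (W x) q" by (auto simp: Fp_def)
    show "0 \<le> val p q" unfolding val_def
    proof (rule sum_nonneg)
      fix x
      show "0 \<le> p x * G (fdiv f (W x) q)"
      proof (cases "p x = 0")
        case False
        then have "0 < p x" using ppos[of x] by simp
        then show ?thesis using G_fdiv_nonneg[of f G "W x" q, OF f_convex f_one G_nonneg G_zero Wd[of x] q(1) q(2)[OF \<open>0 < p x\<close>]] ppos
          by simp
      qed simp
    qed
  qed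
  have Fu_alt: "Fu = {q. is_dist q \<and> (\<forall>x. abs_cont (W x) q)}" using npos by (auto simp: Fu_def)

  have key: "Inf (val p ` Fp) \<le> (\<Sum>x\<in>UNIV. p (\<pi> x) * G (fdiv f (W x) q))"
    if q: "q \<in> Fu" and pi: "bij \<pi>" for q \<pi>
  proof -
    define \<sigma> where "\<sigma> = inv \<pi>"
    have sig: "bij \<sigma>" using pi by (simp add: \<sigma>_def bij_imp_bij_inv)
    obtain \<sigma>' :: "'y \<Rightarrow> 'y" where s': "bij \<sigma>'" "\<And>x y. W (\<sigma> x) (\<sigma>' y) = W x y"
      using W_perm_inv[OF sig] by blast
    have qd: "is_dist q" and qac: "\<And>x. abs_cont (W x) q" using q by (auto simp: Fu_alt)
    define q' where "q' = q \<circ> \<sigma>'"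
    have fd: "fdiv f (W (\<sigma> x)) q = fdiv f (W x) q'" for x
    proof -
      have "fdiv f (W (\<sigma> x)) q = (\<Sum>y\<in>UNIV. q y * f (W (\<sigma> x) y / q y))" by (simp add: fdiv_def)
      also have "\<dots> = (\<Sum>z\<in>UNIV. q (\<sigma>' z) * f (W (\<sigma> x) (\<sigma>' z) / q (\<sigma>' z)))"
        using sum.reindex[of \<sigma>' UNIV "\<lambda>y. q y * f (W (\<sigma> x) y / q y)"] s'(1)
        by (simp add: bij_def)
      also have "\<dots> = fdiv f (W x) q'" by (simp add: fdiv_def q'_def s'(2))
      finally show ?thesis .
    qed
    have q'd: "is_dist q'"
    proof -
      have "(\<Sum>z\<in>UNIV. q (\<sigma>' z)) = (\<Sum>y\<in>UNIV. q y)"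
        using sum.reindex[of \<sigma>' UNIV q] s'(1) by (simp add: bij_def)
      then show ?thesis using qd by (simp add: is_dist_def q'_def)
    qed
    have q'ac: "abs_cont (W x) q'" for x
      unfolding abs_cont_def q'_def
    proof (intro allI impI)
      fix z assume "(q \<circ> \<sigma>') z = 0"
      then have "W (\<sigma> x) (\<sigma>' z) = 0" using qac[of "\<sigma> x"] by (simp add: abs_cont_def)
      then show "W x z = 0" by (simp add: s'(2))
    qed
    have q'F: "q' \<in> Fp" using q'd q'ac by (simp add: Fp_def)
    have "(\<Sum>x\<in>UNIV. p (\<pi> x) * G (fdiv f (W x) q)) = (\<Sum>z\<in>UNIV. p z * G (fdiv f (W (\<sigma> z)) q))"
    proof -
      have "(\<Sum>z\<in>UNIV. p z * G (fdiv f (W (\<sigma> z)) q))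
          = (\<Sum>x\<in>UNIV. p (\<pi> x) * G (fdiv f (W (\<sigma> (\<pi> x))) q))"
        using sum.reindex[of \<pi> UNIV "\<lambda>z. p z * G (fdiv f (W (\<sigma> z)) q)"] pi
        by (simp add: bij_def)
      also have "\<dots> = (\<Sum>x\<in>UNIV. p (\<pi> x) * G (fdiv f (W x) q))"
        using pi by (simp add: \<sigma>_def bij_def)
      finally show ?thesis by simp
    qed
    also have "\<dots> = val p q'" by (simp add: val_def fd)
    finally have "(\<Sum>x\<in>UNIV. p (\<pi> x) * G (fdiv f (W x) q)) = val p q'" .
    moreover have "Inf (val p ` Fp) \<le> val p q'" using cInf_lower[OF _ bdd] q'F by blast
    ultimately show ?thesis by simp
  qed
  define Perms where "Perms = {\<pi>::'x\<Rightarrow>'x. bij \<pi>}"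
  have finP: "finite Perms" by simp
  define N where "N = real (card Perms)"
  have Npos: "0 < N" unfolding N_def using finP
    by (metis Perms_def bij_id card_gt_0_iff empty_iff mem_Collect_eq of_nat_0_less_iff)
  define c where "c x = (\<Sum>\<pi>\<in>Perms. p (\<pi> x))" for x
  have cc: "c x = c y" for x y
    unfolding c_def
  proof (rule sum.reindex_bij_witness[of _ "\<lambda>\<pi>. \<pi> \<circ> Transposition.transpose x y" "\<lambda>\<pi>. \<pi> \<circ> Transposition.transpose x y"])
    fix a assume "a \<in> Perms"
    then show "a \<circ> Transposition.transpose x y \<circ> Transposition.transpose x y = a" "a \<circ> Transposition.transpose x y \<in> Perms"
      by (auto simp: Perms_def comp_assoc bij_comp)
  qed (auto simp: Perms_def comp_assoc bij_comp)
  have psum_pi: "(\<Sum>x\<in>UNIV. p (\<pi> x)) = 1" if "\<pi> \<in> Perms" for \<pi>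
  proof -
    have "(\<Sum>x\<in>UNIV. p (\<pi> x)) = (\<Sum>x\<in>UNIV. p x)"
      using sum.reindex[of \<pi> UNIV p] that by (simp add: Perms_def bij_def)
    then show ?thesis using psum by simp
  qed
  have "(\<Sum>x\<in>UNIV. c x) = (\<Sum>\<pi>\<in>Perms. \<Sum>x\<in>UNIV. p (\<pi> x))"
    unfolding c_def by (rule sum.swap)
  also have "\<dots> = N" using psum_pi by (simp add: N_def)
  finally have "(\<Sum>x\<in>UNIV. c x) = N" .
  moreover obtain x0 :: 'x where True by blast
  ultimately have "n * c x0 = N"
  proof -
    assume h: "(\<Sum>x\<in>UNIV. c x) = N"
    have "(\<Sum>x\<in>UNIV. c x) = (\<Sum>x\<in>(UNIV::'x set). c x0)" by (rule sum.cong) (auto intro: cc)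
    then show ?thesis using h by (simp add: n_def)
  qed
  then have cval: "c x = N / n" for x using cc[of x x0] npos by (simp add: field_simps)
  define q0 :: "'y \<Rightarrow> real" where "q0 = (\<lambda>_. 1 / real CARD('y))"
  have "q0 \<in> Fu" by (simp add: Fu_alt q0_def is_dist_def abs_cont_def)
  then have Fune: "val (\<lambda>_. 1/n) ` Fu \<noteq> {}" by blast
  have "Inf (val p ` Fp) \<le> Inf (val (\<lambda>_. 1/n) ` Fu)"
  proof (rule cInf_greatest[OF Fune])
    fix v assume "v \<in> val (\<lambda>_. 1/n) ` Fu"
    then obtain q where q: "q \<in> Fu" and v: "v = val (\<lambda>_. 1/n) q" by blast
    define g where "g x = G (fdiv f (W x) q)" for x
    have "N * Inf (val p ` Fp) = (\<Sum>\<pi>\<in>Perms. Inf (val p ` Fp))" by (simp add: N_def)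
    also have "\<dots> \<le> (\<Sum>\<pi>\<in>Perms. \<Sum>x\<in>UNIV. p (\<pi> x) * g x)"
      by (rule sum_mono) (use key[OF q] in \<open>auto simp: Perms_def g_def\<close>)
    also have "\<dots> = (\<Sum>x\<in>UNIV. c x * g x)"
      unfolding c_def by (subst sum.swap) (simp add: sum_distrib_right)
    also have "\<dots> = N * v" by (simp add: cval v val_def g_def sum_distrib_left)
    finally show "Inf (val p ` Fp) \<le> v" using Npos by simp
  qed
  then show ?thesis using Ip Iu by simp
qed
end
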